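(* Let $A$ be a rectangular region in the plane, and let $X$ be a set of $n \geq 2$ points placed independently and uniformly at random in $A$. Then the probability that $X$ is not nice for $A$ is at most $6/n$.
   Context: The edges of a rectangular region $A$ are the four line segments forming its boundary. For an edge $e$ of $A$, let $x_e = \arg\min_{x\in X} d(x,e)$ be the point of $X$ closest to $e$, where $d(x,e) = \min_{y \in e} d(x,y)$ and $d$ is Euclidean distance. The set $X$ is called nice for $A$ if for each pair of distinct edges $e, f$ of $A$ we have $x_e \neq x_f$. *)

theory Defs
  imports "HOL-Probability.Probability"
begin

definition rect :: "real \<times> real \<Rightarrow> real \<times> real \<Rightarrow> real \<times> real \<Rightarrow> (real \<times> real) set" where
  "rect c u v = {c + s *\<^sub>R u + t *\<^sub>R v | s t. s \<in> {0..1} \<and> t \<in> {0..1}}"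

definition rect_edges :: "real \<times> real \<Rightarrow> real \<times> real \<Rightarrow> real \<times> real \<Rightarrow> (real \<times> real) set set" where
  "rect_edges c u v =
     {closed_segment c (c + u), closed_segment (c + u) (c + u + v),
      closed_segment (c + u + v) (c + v), closed_segment (c + v) c}"

definition closest_to :: "(real \<times> real) set \<Rightarrow> (real \<times> real) set \<Rightarrow> real \<times> real \<Rightarrow> bool" where
  "closest_to X e x \<longleftrightarrow> x \<in> X \<and> (\<forall>y\<in>X. infdist x e \<le> infdist y e)"

text \<open>X is nice for the rectangle: the closest points to distinct edges differ.
  (If minimizers are not unique, every choice of minimizers must differ; ties
  occur with probability zero.)\<close>
definition nice :: "(real \<times> real) set \<Rightarrow> real \<times> real \<Rightarrow> real \<times> real \<Rightarrow> real \<times> real \<Rightarrow> bool" where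
  "nice X c u v \<longleftrightarrow>
     (\<forall>e\<in>rect_edges c u v. \<forall>f\<in>rect_edges c u v. e \<noteq> f \<longrightarrow>
        (\<forall>x y. closest_to X e x \<and> closest_to X f y \<longrightarrow> x \<noteq> y))"

end

theory Submission
  imports Defs
begin


definition pres :: "(real \<times> real \<Rightarrow> real \<times> real) \<Rightarrow> real \<Rightarrow> bool" where
  "pres F K \<longleftrightarrow> K \<ge> 0 \<and> F \<in> borel_measurable borel \<and>
     (\<forall>A\<in>sets borel. emeasure lborel (F -` A) * ennreal K = emeasure lborel A)"

lemma pres_comp:
  assumes "pres F a" "pres G b" shows "pres (F \<circ> G) (a * b)"
proof -
  have Fm: "F \<in> borel_measurable borel" and Gm: "G \<in> borel_measurable borel" using assms by (auto simp: pres_def)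
  have ab: "a \<ge> 0" "b \<ge> 0" using assms by (auto simp: pres_def)
  { fix A :: "(real \<times> real) set" assume A: "A \<in> sets borel"
    have FA: "F -` A \<in> sets borel" using measurable_sets[OF Fm A] by simp
    have "emeasure lborel ((F \<circ> G) -` A) * ennreal (a * b) = (emeasure lborel (G -` (F -` A)) * ennreal b) * ennreal a"
      using ab by (simp add: vimage_comp ennreal_mult mult_ac)
    also have "\<dots> = emeasure lborel A" using assms FA A by (simp add: pres_def)
    finally have "emeasure lborel ((F \<circ> G) -` A) * ennreal (a * b) = emeasure lborel A" . }
  then show ?thesis using ab Fm Gm by (auto simp: pres_def intro: mult_nonneg_nonneg measurable_comp)
qed

lemma pres_shear1: "pres (\<lambda>(x,y). (x, y + k * x)) 1"
proof -
  interpret pair_sigma_finite lborel "lborel :: real measure" ..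
  have m: "(\<lambda>(x::real,y::real). (x, y + k * x)) \<in> borel_measurable borel" unfolding case_prod_beta' by (intro borel_measurable_continuous_onI continuous_intros)
  { fix A :: "(real \<times> real) set" assume A: "A \<in> sets borel"
    have A2: "A \<in> sets (lborel \<Otimes>\<^sub>M lborel)" using A by (subst lborel_prod) simp
    have B2: "(\<lambda>(x,y). (x, y + k * x)) -` A \<in> sets (lborel \<Otimes>\<^sub>M lborel)"
      using measurable_sets[OF m A] by (subst lborel_prod) simp
    have "emeasure lborel ((\<lambda>(x,y). (x, y + k * x)) -` A) = emeasure (lborel \<Otimes>\<^sub>M lborel) ((\<lambda>(x,y). (x, y + k * x)) -` A)"
      by (simp add: lborel_prod)
    also have "\<dots> = (\<integral>\<^sup>+x. emeasure lborel (Pair x -` ((\<lambda>(x,y). (x, y + k * x)) -` A)) \<partial>lborel)"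
      by (rule lborel.emeasure_pair_measure_alt[OF B2])
    also have "\<dots> = (\<integral>\<^sup>+x. emeasure lborel (Pair x -` A) \<partial>lborel)"
    proof (rule nn_integral_cong)
      fix x :: real
      have PA: "Pair x -` A \<in> sets borel" using sets_Pair1[OF A2] by simp
      have "Pair x -` ((\<lambda>(x,y). (x, y + k * x)) -` A) = ((+) (k * x)) -` (Pair x -` A) \<inter> space lborel"
        by (auto simp: add.commute)
      then have "emeasure lborel (Pair x -` ((\<lambda>(x,y). (x, y + k * x)) -` A)) = emeasure (distr lborel borel ((+) (k * x))) (Pair x -` A)"
        using PA by (simp add: emeasure_distr)
      also have "\<dots> = emeasure lborel (Pair x -` A)" by (simp add: lborel_distr_plus)
      finally show "emeasure lborel (Pair x -` ((\<lambda>(x,y). (x, y + k * x)) -` A)) = emeasure lborel (Pair x -` A)" .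
    qed
    also have "\<dots> = emeasure (lborel \<Otimes>\<^sub>M lborel) A"
      by (rule lborel.emeasure_pair_measure_alt[OF A2, symmetric])
    also have "\<dots> = emeasure lborel A" by (simp add: lborel_prod)
    finally have "emeasure lborel ((\<lambda>(x,y). (x, y + k * x)) -` A) * ennreal 1 = emeasure lborel A" by simp }
  then show ?thesis using m by (simp add: pres_def)
qed

lemma pres_swap: "pres (\<lambda>(x::real,y::real). (y, x)) 1"
proof -
  have m: "(\<lambda>(x::real,y::real). (y, x)) \<in> borel_measurable borel" unfolding case_prod_beta' by (intro borel_measurable_continuous_onI continuous_intros)
  have "lborel = distr lborel borel (\<lambda>(x::real,y::real). (y, x))"
  proof (rule lborel_eqI)
    fix l u :: "real \<times> real"
    assume le: "\<And>b. b \<in> Basis \<Longrightarrow> l \<bullet> b \<le> u \<bullet> b"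
    obtain l1 l2 u1 u2 where lu: "l = (l1, l2)" "u = (u1, u2)" by (cases l, cases u)
    have B: "(Basis :: (real \<times> real) set) = {(1,0),(0,1)}" by (auto simp: Basis_prod_def)
    have "l1 \<le> u1" using le[of "(1,0)"] by (simp add: B lu)
    have "l2 \<le> u2" using le[of "(0,1)"] by (simp add: B lu)
    have pre: "(\<lambda>(x::real,y::real). (y, x)) -` box l u = box (l2, l1) (u2, u1)"
      unfolding lu box_prod by auto
    have "emeasure (distr lborel borel (\<lambda>(x::real,y::real). (y, x))) (box l u) = emeasure lborel ((\<lambda>(x::real,y::real). (y, x)) -` box l u)"
      using m by (subst emeasure_distr) auto
    also have "\<dots> = emeasure lborel (box (l2, l1) (u2, u1))" using pre by simp
    also have "\<dots> = ennreal ((u2 - l2) * (u1 - l1))"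
      using \<open>l1 \<le> u1\<close> \<open>l2 \<le> u2\<close> by (subst emeasure_lborel_box_eq) (simp add: B)
    also have "(u2 - l2) * (u1 - l1) = (\<Prod>b\<in>Basis. (u - l) \<bullet> b)" by (simp add: B lu)
    finally show "emeasure (distr lborel borel (\<lambda>(x::real,y::real). (y, x))) (box l u) = (\<Prod>b\<in>Basis. (u - l) \<bullet> b)" .
  qed simp
  then have "emeasure lborel A = emeasure lborel ((\<lambda>(x::real,y::real). (y, x)) -` A)" if "A \<in> sets borel" for A
  proof -
    have "emeasure lborel A = emeasure (distr lborel borel (\<lambda>(x::real,y::real). (y, x))) A"
      using \<open>lborel = _\<close> by simp
    also have "\<dots> = emeasure lborel ((\<lambda>(x::real,y::real). (y, x)) -` A)"
      using that m by (subst emeasure_distr) auto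
    finally show ?thesis .
  qed
  then show ?thesis using m by (simp add: pres_def)
qed

lemma pres_diag:
  assumes "\<alpha> \<noteq> 0" "\<beta> \<noteq> 0"
  shows "pres (\<lambda>(x,y). (\<alpha> * x + t1, \<beta> * y + t2)) (\<bar>\<alpha>\<bar> * \<bar>\<beta>\<bar>)"
proof -
  define c where "c j = (if j = ((1::real),(0::real)) then \<alpha> else \<beta>)" for j :: "real \<times> real"
  have Bs: "(Basis :: (real \<times> real) set) = {(1,0),(0,1)}" by (auto simp: Basis_prod_def)
  have T: "(\<lambda>x. (t1,t2) + (\<Sum>j\<in>Basis. (c j * (x \<bullet> j)) *\<^sub>R j)) = (\<lambda>(x,y). (\<alpha> * x + t1, \<beta> * y + t2))"
    by (auto simp: Bs c_def fun_eq_iff)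
  have "lborel = density (distr lborel borel (\<lambda>(x,y). (\<alpha> * x + t1, \<beta> * y + t2))) (\<lambda>_. (\<Prod>j\<in>Basis. \<bar>c j\<bar>))"
    using lborel_affine_euclidean[of c "(t1,t2)"] assms unfolding T by (auto simp: c_def)
  moreover have "(\<Prod>j\<in>(Basis::(real\<times>real) set). \<bar>c j\<bar>) = \<bar>\<alpha>\<bar> * \<bar>\<beta>\<bar>" by (simp add: Bs c_def)
  ultimately have eq: "lborel = density (distr lborel borel (\<lambda>(x,y). (\<alpha> * x + t1, \<beta> * y + t2))) (\<lambda>_. \<bar>\<alpha>\<bar> * \<bar>\<beta>\<bar>)" by simp
  have m: "(\<lambda>(x::real,y::real). (\<alpha> * x + t1, \<beta> * y + t2)) \<in> borel_measurable borel" unfolding case_prod_beta' by (intro borel_measurable_continuous_onI continuous_intros)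
  { fix A :: "(real \<times> real) set" assume A: "A \<in> sets borel"
    have "emeasure lborel A = emeasure (density (distr lborel borel (\<lambda>(x,y). (\<alpha> * x + t1, \<beta> * y + t2))) (\<lambda>_. \<bar>\<alpha>\<bar> * \<bar>\<beta>\<bar>)) A"
      using eq by metis
    also have "\<dots> = ennreal (\<bar>\<alpha>\<bar> * \<bar>\<beta>\<bar>) * emeasure (distr lborel borel (\<lambda>(x,y). (\<alpha> * x + t1, \<beta> * y + t2))) A"
      using A by (simp add: emeasure_density nn_integral_cmult_indicator)
    also have "\<dots> = ennreal (\<bar>\<alpha>\<bar> * \<bar>\<beta>\<bar>) * emeasure lborel ((\<lambda>(x,y). (\<alpha> * x + t1, \<beta> * y + t2)) -` A)"
      using A m by (simp add: emeasure_distr)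
    finally have "emeasure lborel ((\<lambda>(x,y). (\<alpha> * x + t1, \<beta> * y + t2)) -` A) * ennreal (\<bar>\<alpha>\<bar> * \<bar>\<beta>\<bar>) = emeasure lborel A"
      by (simp add: mult.commute) }
  then show ?thesis using m by (simp add: pres_def)
qed



definition Phi :: "real \<times> real \<Rightarrow> real \<times> real \<Rightarrow> real \<times> real \<Rightarrow> real \<times> real \<Rightarrow> real \<times> real" where
  "Phi c u v w = c + fst w *\<^sub>R u + snd w *\<^sub>R v"

lemma pres_Phi:
  fixes c u v :: "real \<times> real"
  assumes "u \<noteq> 0" "v \<noteq> 0" "inner u v = 0"
  shows "\<exists>K>0. pres (Phi c u v) K"
proof -
  obtain a b where u: "u = (a, b)" by (cases u)
  obtain p q where v: "v = (p, q)" by (cases v)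
  obtain c1 c2 where c: "c = (c1, c2)" by (cases c)
  have orth: "a * p + b * q = 0" using assms(3) by (simp add: u v)
  have ab: "a \<noteq> 0 \<or> b \<noteq> 0" using assms(1) by (auto simp: u zero_prod_def)
  have pq: "p \<noteq> 0 \<or> q \<noteq> 0" using assms(2) by (auto simp: v zero_prod_def)
  show ?thesis
  proof (cases "a = 0")
    case True
    then have "b \<noteq> 0" using ab by simp
    then have "q = 0" using orth True by simp
    then have "p \<noteq> 0" using pq by simp
    have "pres ((\<lambda>(x::real,y::real). (y, x)) \<circ> (\<lambda>(x,y). (b * x + c2, p * y + c1))) (1 * (\<bar>b\<bar> * \<bar>p\<bar>))"
      by (intro pres_comp pres_swap pres_diag \<open>b \<noteq> 0\<close> \<open>p \<noteq> 0\<close>)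
    moreover have "((\<lambda>(x::real,y::real). (y, x)) \<circ> (\<lambda>(x,y). (b * x + c2, p * y + c1))) = Phi c u v"
      by (auto simp: fun_eq_iff Phi_def u v c True \<open>q = 0\<close>)
    ultimately show ?thesis using \<open>b \<noteq> 0\<close> \<open>p \<noteq> 0\<close> by (intro exI[of _ "1 * (\<bar>b\<bar> * \<bar>p\<bar>)"]) auto
  next
    case False
    define d where "d = a * q - b * p"
    have "d \<noteq> 0"
    proof
      assume "d = 0"
      then have "a * q = b * p" by (simp add: d_def)
      have "(a*a + b*b) * q = a * (a * q) + b * (b * q)" by (simp add: algebra_simps)
      also have "\<dots> = b * (a * p + b * q)" using \<open>a * q = b * p\<close> by (simp add: algebra_simps)
      finally have "q = 0" using orth False by (simp add: add_nonneg_eq_0_iff)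
      then have "p = 0" using orth False by simp
      with \<open>q = 0\<close> pq show False by simp
    qed
    have "d / a \<noteq> 0" using \<open>d \<noteq> 0\<close> False by simp
    have "pres ((\<lambda>(x,y). (x, y + (b/a) * x)) \<circ> ((\<lambda>(x,y). (a * x + c1, (d/a) * y + (c2 - (b/a) * c1)))
              \<circ> ((\<lambda>(x::real,y::real). (y, x)) \<circ> ((\<lambda>(x,y). (x, y + (p/a) * x)) \<circ> (\<lambda>(x::real,y::real). (y, x))))))
            (1 * ((\<bar>a\<bar> * \<bar>d/a\<bar>) * (1 * (1 * 1))))"
      by (intro pres_comp pres_swap pres_diag pres_shear1 False \<open>d / a \<noteq> 0\<close>)
    moreover have "((\<lambda>(x,y). (x, y + (b/a) * x)) \<circ> ((\<lambda>(x,y). (a * x + c1, (d/a) * y + (c2 - (b/a) * c1)))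
              \<circ> ((\<lambda>(x::real,y::real). (y, x)) \<circ> ((\<lambda>(x,y). (x, y + (p/a) * x)) \<circ> (\<lambda>(x::real,y::real). (y, x)))))) = Phi c u v"
      using False by (auto simp: fun_eq_iff Phi_def u v c d_def field_simps)
    ultimately show ?thesis using False \<open>d \<noteq> 0\<close> by (intro exI[of _ "1 * ((\<bar>a\<bar> * \<bar>d/a\<bar>) * (1 * (1 * 1)))"]) auto
  qed
qed



abbreviation sq :: "(real \<times> real) set" where "sq \<equiv> cbox (0,0) (1,1)"

lemma Phi_cont: "continuous_on S (Phi c u v)"
  unfolding Phi_def by (intro continuous_intros)

lemma Phi_meas: "Phi c u v \<in> borel_measurable borel"
  by (intro borel_measurable_continuous_onI Phi_cont)

lemma rect_Phi: "rect c u v = Phi c u v ` sq"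
  unfolding rect_def Phi_def by (auto simp: cbox_Pair_eq image_def; force)

lemma Phi_inj:
  assumes "u \<noteq> 0" "v \<noteq> 0" "inner u v = 0"
  shows "inj (Phi c u v)"
proof (rule injI)
  fix w w' assume eq: "Phi c u v w = Phi c u v w'"
  then have "(fst w - fst w') *\<^sub>R u + (snd w - snd w') *\<^sub>R v = 0"
    by (simp add: Phi_def algebra_simps)
  then have e: "inner ((fst w - fst w') *\<^sub>R u + (snd w - snd w') *\<^sub>R v) u = 0"
       "inner ((fst w - fst w') *\<^sub>R u + (snd w - snd w') *\<^sub>R v) v = 0" by simp_all
  have vu: "inner v u = 0" using assms(3) by (simp add: inner_commute)
  have "inner ((fst w - fst w') *\<^sub>R u + (snd w - snd w') *\<^sub>R v) u = (fst w - fst w') * inner u u"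
    by (simp add: inner_add_left vu)
  then have "(fst w - fst w') * inner u u = 0" using e(1) by simp
  then have 1: "fst w = fst w'" using assms(1) by simp
  have "inner ((fst w - fst w') *\<^sub>R u + (snd w - snd w') *\<^sub>R v) v = (snd w - snd w') * inner v v"
    using assms(3) by (simp add: inner_add_left)
  then have "(snd w - snd w') * inner v v = 0" using e(2) by simp
  then have 2: "snd w = snd w'" using assms(2) by simp
  show "w = w'" using 1 2 by (simp add: prod_eq_iff)
qed

lemma Phi_vimage_rect:
  assumes "u \<noteq> 0" "v \<noteq> 0" "inner u v = 0"
  shows "Phi c u v -` rect c u v = sq"
  using Phi_inj[OF assms, of c] unfolding rect_Phi by (auto dest: injD)

lemma sq_measure: "emeasure lborel sq = 1"
  by (simp add: emeasure_lborel_cbox_eq Basis_prod_def)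

lemma rect_borel: "rect c u v \<in> sets borel"
proof -
  have "compact (rect c u v)" unfolding rect_Phi
    by (intro compact_continuous_image Phi_cont compact_cbox)
  then show ?thesis by (intro borel_closed compact_imp_closed)
qed

lemma rect_measure:
  assumes "pres (Phi c u v) K" "u \<noteq> 0" "v \<noteq> 0" "inner u v = 0"
  shows "emeasure lborel (rect c u v) = ennreal K"
  using assms(1) rect_borel[of c u v] unfolding pres_def
  by (metis Phi_vimage_rect[OF assms(2-4)] sq_measure mult_1)

lemma mu_eq:
  assumes "pres (Phi c u v) K" "K > 0" "u \<noteq> 0" "v \<noteq> 0" "inner u v = 0"
  shows "uniform_measure lborel (rect c u v) = distr (uniform_measure lborel sq) borel (Phi c u v)"
proof (rule measure_eqI)
  show "sets (uniform_measure lborel (rect c u v)) = sets (distr (uniform_measure lborel sq) borel (Phi c u v))"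
    by simp
  fix A assume "A \<in> sets (uniform_measure lborel (rect c u v))"
  then have A: "A \<in> sets borel" by simp
  have RA: "rect c u v \<inter> A \<in> sets borel" using A rect_borel by auto
  have vim: "Phi c u v -` (rect c u v \<inter> A) = sq \<inter> Phi c u v -` A"
    using Phi_vimage_rect[OF assms(3-5)] by auto
  have "emeasure (uniform_measure lborel (rect c u v)) A = emeasure lborel (rect c u v \<inter> A) / ennreal K"
    using A rect_borel rect_measure[OF assms(1) assms(3-5)] by simp
  also have "emeasure lborel (rect c u v \<inter> A) = emeasure lborel (sq \<inter> Phi c u v -` A) * ennreal K"
    using assms(1) RA unfolding pres_def vim[symmetric] by metis
  also have "emeasure lborel (sq \<inter> Phi c u v -` A) * ennreal K / ennreal K = emeasure lborel (sq \<inter> Phi c u v -` A)"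
    using assms(2) by (intro ennreal_mult_divide_eq) auto
  also have "\<dots> = emeasure (uniform_measure lborel sq) (Phi c u v -` A)"
    using measurable_sets[OF Phi_meas A] by (simp add: sq_measure divide_ennreal_def)
  also have "\<dots> = emeasure (distr (uniform_measure lborel sq) borel (Phi c u v)) A"
    using A Phi_meas by (subst emeasure_distr) auto
  finally show "emeasure (uniform_measure lborel (rect c u v)) A = emeasure (distr (uniform_measure lborel sq) borel (Phi c u v)) A" .
qed



lemma infdist_seg:
  fixes a w z :: "real \<times> real"
  assumes "inner w z = 0" "0 \<le> \<sigma>" "\<sigma> \<le> 1"
  shows "infdist (a + \<sigma> *\<^sub>R w + \<tau> *\<^sub>R z) (closed_segment a (a + w)) = \<bar>\<tau>\<bar> * norm z"
proof (rule antisym)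
  have "a + \<sigma> *\<^sub>R w \<in> closed_segment a (a + w)"
    using assms(2,3) unfolding closed_segment_def
    by (intro CollectI exI[of _ \<sigma>]) (simp add: algebra_simps)
  then show "infdist (a + \<sigma> *\<^sub>R w + \<tau> *\<^sub>R z) (closed_segment a (a + w)) \<le> \<bar>\<tau>\<bar> * norm z"
    by (rule infdist_le2) (simp add: dist_norm)
next
  have ne: "closed_segment a (a + w) \<noteq> {}" by simp
  show "\<bar>\<tau>\<bar> * norm z \<le> infdist (a + \<sigma> *\<^sub>R w + \<tau> *\<^sub>R z) (closed_segment a (a + w))"
    unfolding infdist_notempty[OF ne]
  proof (rule cINF_greatest[OF ne])
    fix y assume "y \<in> closed_segment a (a + w)"
    then obtain r where y: "y = (1 - r) *\<^sub>R a + r *\<^sub>R (a + w)" unfolding closed_segment_def by blast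
    have e: "a + \<sigma> *\<^sub>R w + \<tau> *\<^sub>R z - y = (\<sigma> - r) *\<^sub>R w + \<tau> *\<^sub>R z"
      by (simp add: y algebra_simps)
    have d: "dist (a + \<sigma> *\<^sub>R w + \<tau> *\<^sub>R z) y = norm ((\<sigma> - r) *\<^sub>R w + \<tau> *\<^sub>R z)"
      unfolding dist_norm e ..
    have "inner ((\<sigma> - r) *\<^sub>R w) (\<tau> *\<^sub>R z) = 0" using assms(1) by simp
    then have "(norm ((\<sigma> - r) *\<^sub>R w + \<tau> *\<^sub>R z))^2 = (norm ((\<sigma> - r) *\<^sub>R w))^2 + (norm (\<tau> *\<^sub>R z))^2"
      by (metis norm_add_Pythagorean orthogonal_def)
    then have "(\<bar>\<tau>\<bar> * norm z)^2 \<le> (norm ((\<sigma> - r) *\<^sub>R w + \<tau> *\<^sub>R z))^2"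
      by (simp add: power_mult_distrib)
    then have "\<bar>\<tau>\<bar> * norm z \<le> norm ((\<sigma> - r) *\<^sub>R w + \<tau> *\<^sub>R z)"
      by (rule power2_le_imp_le) simp
    then show "\<bar>\<tau>\<bar> * norm z \<le> dist (a + \<sigma> *\<^sub>R w + \<tau> *\<^sub>R z) y" using d by simp
  qed
qed

definition edge :: "real \<times> real \<Rightarrow> real \<times> real \<Rightarrow> real \<times> real \<Rightarrow> nat \<Rightarrow> (real \<times> real) set" where
  "edge c u v k = (if k = 0 then closed_segment c (c + u) else if k = 1 then closed_segment (c + u) (c + u + v)
     else if k = 2 then closed_segment (c + u + v) (c + v) else closed_segment (c + v) c)"

definition phi :: "nat \<Rightarrow> real \<times> real \<Rightarrow> real" where
  "phi k w = (if k = 0 then snd w else if k = 1 then 1 - fst w else if k = 2 then 1 - snd w else fst w)"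

definition ck :: "real \<times> real \<Rightarrow> real \<times> real \<Rightarrow> nat \<Rightarrow> real" where
  "ck u v k = (if k = 0 \<or> k = 2 then norm v else norm u)"

lemma rect_edges_eq: "rect_edges c u v = edge c u v ` {..<4}"
  by (auto simp: rect_edges_def edge_def lessThan_def numeral_eq_Suc less_Suc_eq image_def)

lemma edge_dist:
  assumes "inner u v = 0" "w \<in> sq" "k < 4"
  shows "infdist (Phi c u v w) (edge c u v k) = ck u v k * phi k w"
proof -
  obtain s t where w: "w = (s, t)" by (cases w)
  have st: "0 \<le> s" "s \<le> 1" "0 \<le> t" "t \<le> 1" using assms(2) by (auto simp: w cbox_Pair_eq)
  have vu: "inner v u = 0" using assms(1) by (simp add: inner_commute)
  have k: "k = 0 \<or> k = 1 \<or> k = 2 \<or> k = 3" using assms(3) by auto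
  moreover
  { assume k0: "k = 0"
    have P: "Phi c u v w = c + s *\<^sub>R u + t *\<^sub>R v" by (simp add: Phi_def w)
    have E: "edge c u v k = closed_segment c (c + u)" by (simp add: edge_def k0)
    have "infdist (c + s *\<^sub>R u + t *\<^sub>R v) (closed_segment c (c + u)) = \<bar>t\<bar> * norm v"
      by (rule infdist_seg) (use assms(1) st in auto)
    then have ?thesis unfolding P E using k0 st by (simp add: ck_def phi_def w) }
  moreover
  { assume k1: "k = 1"
    have P: "Phi c u v w = (c + u) + t *\<^sub>R v + (s - 1) *\<^sub>R u" by (simp add: Phi_def w algebra_simps)
    have E: "edge c u v k = closed_segment (c + u) ((c + u) + v)" by (simp add: edge_def k1)
    have "infdist ((c + u) + t *\<^sub>R v + (s - 1) *\<^sub>R u) (closed_segment (c + u) ((c + u) + v)) = \<bar>s - 1\<bar> * norm u"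
      by (rule infdist_seg) (use vu st in auto)
    then have ?thesis unfolding P E using k1 st by (simp add: ck_def phi_def w) }
  moreover
  { assume k2: "k = 2"
    have P: "Phi c u v w = (c + u + v) + (1 - s) *\<^sub>R (-u) + (t - 1) *\<^sub>R v" by (simp add: Phi_def w algebra_simps)
    have E: "edge c u v k = closed_segment (c + u + v) ((c + u + v) + (-u))" by (simp add: edge_def k2)
    have "infdist ((c + u + v) + (1 - s) *\<^sub>R (-u) + (t - 1) *\<^sub>R v) (closed_segment (c + u + v) ((c + u + v) + (-u))) = \<bar>t - 1\<bar> * norm v"
      by (rule infdist_seg) (use assms(1) st in auto)
    then have ?thesis unfolding P E using k2 st by (simp add: ck_def phi_def w) }
  moreover
  { assume k3: "k = 3"
    have P: "Phi c u v w = (c + v) + (1 - t) *\<^sub>R (-v) + s *\<^sub>R u" by (simp add: Phi_def w algebra_simps)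
    have E: "edge c u v k = closed_segment (c + v) ((c + v) + (-v))" by (simp add: edge_def k3)
    have "infdist ((c + v) + (1 - t) *\<^sub>R (-v) + s *\<^sub>R u) (closed_segment (c + v) ((c + v) + (-v))) = \<bar>s\<bar> * norm u"
      by (rule infdist_seg) (use vu st in auto)
    then have ?thesis unfolding P E using k3 st by (simp add: ck_def phi_def w) }
  ultimately show ?thesis by blast
qed



lemma prod_first_bound:
  fixes \<mu> :: "'a measure" and J :: "nat set"
  assumes ps: "prob_space \<mu>" and fin: "finite J" and iJ: "i \<notin> J"
    and Pm: "{z \<in> space (\<mu> \<Otimes>\<^sub>M \<mu>). P (fst z) (snd z)} \<in> sets (\<mu> \<Otimes>\<^sub>M \<mu>)"
    and refl: "\<And>p. P p p"
  shows "emeasure (PiM (insert i J) (\<lambda>_. \<mu>)) {x \<in> space (PiM (insert i J) (\<lambda>_. \<mu>)). \<forall>j\<in>insert i J. P (x i) (x j)}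
       = (\<integral>\<^sup>+p. emeasure \<mu> {q \<in> space \<mu>. P p q} ^ card J \<partial>\<mu>)"
proof -
  interpret prob_space \<mu> by (rule ps)
  interpret product_prob_space "\<lambda>_::nat. \<mu>" ..
  define B where "B = {x \<in> space (PiM (insert i J) (\<lambda>_. \<mu>)). \<forall>j\<in>insert i J. P (x i) (x j)}"
  define Q where "Q = {z \<in> space (\<mu> \<Otimes>\<^sub>M \<mu>). P (fst z) (snd z)}"
  have Pm': "Measurable.pred (\<mu> \<Otimes>\<^sub>M \<mu>) (\<lambda>z. P (fst z) (snd z))"
    using Pm by (simp add: pred_def)
  have Bm: "B \<in> sets (PiM (insert i J) (\<lambda>_. \<mu>))"
  proof -
    have "Measurable.pred (PiM (insert i J) (\<lambda>_. \<mu>)) (\<lambda>x. \<forall>j\<in>insert i J. P (x i) (x j))"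
    proof (intro pred_intros_finite)
      show "finite (insert i J)" using fin by simp
      fix j assume "j \<in> insert i J"
      have "(\<lambda>x. (x i, x j)) \<in> measurable (PiM (insert i J) (\<lambda>_. \<mu>)) (\<mu> \<Otimes>\<^sub>M \<mu>)"
        using \<open>j \<in> insert i J\<close> by measurable
      from measurable_compose[OF this Pm'] show "Measurable.pred (PiM (insert i J) (\<lambda>_. \<mu>)) (\<lambda>x. P (x i) (x j))"
        by simp
    qed
    then show ?thesis unfolding B_def by (simp add: pred_def)
  qed
  have "emeasure (PiM (insert i J) (\<lambda>_. \<mu>)) B = (\<integral>\<^sup>+x. indicator B x \<partial>PiM (insert i J) (\<lambda>_. \<mu>))"
    using Bm by simp
  also have "\<dots> = (\<integral>\<^sup>+ y. (\<integral>\<^sup>+ x. indicator B (x(i := y)) \<partial>(PiM J (\<lambda>_. \<mu>))) \<partial>\<mu>)"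
    by (rule product_nn_integral_insert_rev) (use fin iJ Bm in auto)
  also have "\<dots> = (\<integral>\<^sup>+ y. emeasure \<mu> {q \<in> space \<mu>. P y q} ^ card J \<partial>\<mu>)"
  proof (rule nn_integral_cong)
    fix y assume y: "y \<in> space \<mu>"
    define D where "D = {q \<in> space \<mu>. P y q}"
    have D: "D \<in> sets \<mu>"
    proof -
      have "D = Pair y -` Q" using y by (auto simp: D_def Q_def space_pair_measure)
      then show ?thesis using sets_Pair1[of Q] Pm unfolding Q_def by simp
    qed
    have "(\<integral>\<^sup>+ x. indicator B (x(i := y)) \<partial>(PiM J (\<lambda>_. \<mu>))) = (\<integral>\<^sup>+ x. indicator (PiE J (\<lambda>_. D)) x \<partial>(PiM J (\<lambda>_. \<mu>)))"
    proof (rule nn_integral_cong)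
      fix x assume x: "x \<in> space (PiM J (\<lambda>_. \<mu>))"
      have xs: "x(i := y) \<in> space (PiM (insert i J) (\<lambda>_. \<mu>))"
        using x y iJ by (auto simp: space_PiM PiE_def extensional_def)
      have "x(i := y) \<in> B \<longleftrightarrow> x \<in> PiE J (\<lambda>_. D)"
        using x y iJ xs refl by (auto simp: B_def D_def space_PiM PiE_def Pi_def)
      then show "indicator B (x(i := y)) = indicator (PiE J (\<lambda>_. D)) x"
        by (simp add: indicator_def)
    qed
    also have "\<dots> = emeasure (PiM J (\<lambda>_. \<mu>)) (PiE J (\<lambda>_. D))"
      using D fin by (intro nn_integral_indicator) (simp add: sets_PiM_I_finite)
    also have "\<dots> = (\<Prod>j\<in>J. emeasure \<mu> D)"
      using D fin by (intro emeasure_PiM) auto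
    also have "\<dots> = emeasure \<mu> D ^ card J" by simp
    finally show "(\<integral>\<^sup>+ x. indicator B (x(i := y)) \<partial>(PiM J (\<lambda>_. \<mu>))) = emeasure \<mu> {q \<in> space \<mu>. P y q} ^ card J"
      by (simp add: D_def)
  qed
  finally show ?thesis unfolding B_def .
qed



lemma int1a: "(\<integral>\<^sup>+x. ennreal (x ^ m) * indicator {0..1} x \<partial>lborel) = ennreal (1 / (m+1))"
proof -
  have d: "DERIV (\<lambda>x::real. x ^ Suc m / real (Suc m)) x :> x ^ m" for x
  proof -
    have "DERIV (\<lambda>x::real. x ^ Suc m) x :> real (Suc m) * x ^ (Suc m - 1)" using DERIV_pow[of "Suc m" x] by simp
    then have "DERIV (\<lambda>x::real. x ^ Suc m / real (Suc m)) x :> real (Suc m) * x ^ (Suc m - 1) / real (Suc m)"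
      by (rule DERIV_cdivide)
    then show ?thesis by simp
  qed
  have "(\<integral>\<^sup>+x. ennreal (x ^ m) * indicator {0..1} x \<partial>lborel) = (\<lambda>x::real. x ^ Suc m / real (Suc m)) 1 - (\<lambda>x::real. x ^ Suc m / real (Suc m)) 0"
    apply (rule nn_integral_FTC_Icc) apply simp apply (rule d) apply auto done
  then show ?thesis by simp
qed

lemma int1b: "(\<integral>\<^sup>+x. ennreal ((1 - x) ^ m) * indicator {0..1} x \<partial>lborel) = ennreal (1 / (m+1))"
proof -
  have d: "DERIV (\<lambda>x::real. - ((1 - x) ^ Suc m / real (Suc m))) x :> (1 - x) ^ m" for x
  proof -
    have "DERIV (\<lambda>x::real. 1 - x) x :> -1" by (auto intro!: derivative_eq_intros)
    from DERIV_chain2[OF DERIV_pow[of "Suc m" "1 - x"] this] have "DERIV (\<lambda>x::real. (1 - x) ^ Suc m) x :> real (Suc m) * (1 - x) ^ (Suc m - 1) * -1"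
      by simp
    then have "DERIV (\<lambda>x::real. (1 - x) ^ Suc m / real (Suc m)) x :> real (Suc m) * (1 - x) ^ (Suc m - 1) * -1 / real (Suc m)"
      by (rule DERIV_cdivide)
    then have "DERIV (\<lambda>x::real. - ((1 - x) ^ Suc m / real (Suc m))) x :> - (real (Suc m) * (1 - x) ^ (Suc m - 1) * -1 / real (Suc m))"
      by (rule DERIV_minus)
    then show ?thesis by simp
  qed
  have "(\<integral>\<^sup>+x. ennreal ((1 - x) ^ m) * indicator {0..1} x \<partial>lborel) = (\<lambda>x::real. - ((1 - x) ^ Suc m / real (Suc m))) 1 - (\<lambda>x::real. - ((1 - x) ^ Suc m / real (Suc m))) 0"
    apply (rule nn_integral_FTC_Icc) apply simp apply (rule d) apply auto done
  then show ?thesis by simp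
qed

lemma int2:
  fixes F G :: "real \<Rightarrow> real"
  assumes Fm: "F \<in> borel_measurable borel" and Gm: "G \<in> borel_measurable borel"
    and Fn: "\<And>x. 0 \<le> F x" and Gn: "\<And>x. 0 \<le> G x"
  shows "(\<integral>\<^sup>+w. ennreal ((F (fst w) * G (snd w)) ^ m) * indicator sq w \<partial>lborel)
       = (\<integral>\<^sup>+x. ennreal (F x ^ m) * indicator {0..1} x \<partial>lborel) * (\<integral>\<^sup>+x. ennreal (G x ^ m) * indicator {0..1} x \<partial>lborel)"
proof -
  interpret pair_sigma_finite lborel "lborel :: real measure" ..
  have eq: "ennreal ((F (fst w) * G (snd w)) ^ m) * indicator sq w
      = (ennreal (F (fst w) ^ m) * indicator {0..1} (fst w)) * (ennreal (G (snd w) ^ m) * indicator {0..1} (snd w))" for w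
    using Fn Gn by (cases w) (auto simp: cbox_Pair_eq indicator_def power_mult_distrib ennreal_mult)
  have eq2: "ennreal ((F x * G y) ^ m) * indicator sq (x, y)
      = (ennreal (F x ^ m) * indicator {0..1} x) * (ennreal (G y ^ m) * indicator {0..1} y)" for x y
    using eq[of "(x,y)"] by simp
  have m: "(\<lambda>w::real\<times>real. ennreal ((F (fst w) * G (snd w)) ^ m) * indicator sq w) \<in> borel_measurable (lborel \<Otimes>\<^sub>M lborel)"
  proof -
    have sqm[measurable]: "sq \<in> sets (lborel \<Otimes>\<^sub>M lborel)" by (subst lborel_prod) simp
    show ?thesis using Fm Gm by measurable
  qed
  have "(\<integral>\<^sup>+w. ennreal ((F (fst w) * G (snd w)) ^ m) * indicator sq w \<partial>lborel)
      = (\<integral>\<^sup>+w. ennreal ((F (fst w) * G (snd w)) ^ m) * indicator sq w \<partial>(lborel \<Otimes>\<^sub>M lborel))"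
    by (simp add: lborel_prod)
  also have "\<dots> = (\<integral>\<^sup>+x. \<integral>\<^sup>+y. ennreal ((F (fst (x,y)) * G (snd (x,y))) ^ m) * indicator sq (x,y) \<partial>lborel \<partial>lborel)"
    by (rule lborel.nn_integral_fst[symmetric]) (rule m)
  also have "\<dots> = (\<integral>\<^sup>+x. (ennreal (F x ^ m) * indicator {0..1} x) * (\<integral>\<^sup>+y. ennreal (G y ^ m) * indicator {0..1} y \<partial>lborel) \<partial>lborel)"
    unfolding fst_conv snd_conv eq2
    apply (rule nn_integral_cong) apply (rule nn_integral_cmult) using Gm by measurable
  also have "\<dots> = (\<integral>\<^sup>+x. ennreal (F x ^ m) * indicator {0..1} x \<partial>lborel) * (\<integral>\<^sup>+x. ennreal (G x ^ m) * indicator {0..1} x \<partial>lborel)"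
    by (rule nn_integral_multc) (use Fm in measurable)
  finally show ?thesis .
qed



definition Zset :: "nat \<Rightarrow> nat \<Rightarrow> real \<times> real \<Rightarrow> (real \<times> real) set" where
  "Zset k l w = {w' \<in> sq. phi k w \<le> phi k w' \<and> phi l w \<le> phi l w'}"

lemma emeasure_cbox2:
  assumes "a1 \<le> b1" "a2 \<le> b2"
  shows "emeasure lborel (cbox (a1::real, a2::real) (b1, b2)) = ennreal ((b1 - a1) * (b2 - a2))"
  using assms by (subst emeasure_lborel_cbox_eq) (auto simp: Basis_prod_def)

lemma int_FG:
  fixes F G :: "real \<Rightarrow> real"
  assumes "\<And>w. w \<in> sq \<Longrightarrow> emeasure lborel (Zset k l w) = ennreal (F (fst w) * G (snd w))"
    and "F = (\<lambda>x. x) \<or> F = (\<lambda>x. 1 - x)" and "G = (\<lambda>x. x) \<or> G = (\<lambda>x. 1 - x)"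
  shows "(\<integral>\<^sup>+w. emeasure lborel (Zset k l w) ^ m * indicator sq w \<partial>lborel) = ennreal (1 / real (m+1)) * ennreal (1 / real (m+1))"
proof -
  define F' where "F' x = (if x \<in> {0..1} then F x else 0)" for x
  define G' where "G' x = (if x \<in> {0..1} then G x else 0)" for x
  have Fm: "F' \<in> borel_measurable borel" "G' \<in> borel_measurable borel"
    unfolding F'_def G'_def using assms(2,3) by auto
  have Fn: "\<And>x. 0 \<le> F' x" "\<And>x. 0 \<le> G' x" unfolding F'_def G'_def using assms(2,3) by auto
  have "(\<integral>\<^sup>+w. emeasure lborel (Zset k l w) ^ m * indicator sq w \<partial>lborel)
      = (\<integral>\<^sup>+w. ennreal ((F' (fst w) * G' (snd w)) ^ m) * indicator sq w \<partial>lborel)"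
  proof (rule nn_integral_cong)
    fix w :: "real \<times> real"
    show "emeasure lborel (Zset k l w) ^ m * indicator sq w = ennreal ((F' (fst w) * G' (snd w)) ^ m) * indicator sq w"
    proof (cases "w \<in> sq")
      case True
      then have "fst w \<in> {0..1}" "snd w \<in> {0..1}" by (cases w, auto simp: cbox_Pair_eq)+
      then have "F' (fst w) * G' (snd w) = F (fst w) * G (snd w)" by (simp add: F'_def G'_def)
      moreover have "0 \<le> F (fst w) * G (snd w)" using Fn \<open>F' (fst w) * G' (snd w) = _\<close>[symmetric]
        by (metis mult_nonneg_nonneg)
      ultimately show ?thesis using True assms(1)[OF True] by (simp add: ennreal_power)
    qed simp
  qed
  also have "\<dots> = (\<integral>\<^sup>+x. ennreal (F' x ^ m) * indicator {0..1} x \<partial>lborel) * (\<integral>\<^sup>+x. ennreal (G' x ^ m) * indicator {0..1} x \<partial>lborel)"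
    by (rule int2[OF Fm Fn])
  also have "(\<integral>\<^sup>+x. ennreal (F' x ^ m) * indicator {0..1} x \<partial>lborel) = (\<integral>\<^sup>+x. ennreal (F x ^ m) * indicator {0..1} x \<partial>lborel)"
    by (rule nn_integral_cong) (simp add: F'_def indicator_def)
  also have "\<dots> = ennreal (1 / (m+1))" using assms(2) int1a int1b by auto
  also have "(\<integral>\<^sup>+x. ennreal (G' x ^ m) * indicator {0..1} x \<partial>lborel) = (\<integral>\<^sup>+x. ennreal (G x ^ m) * indicator {0..1} x \<partial>lborel)"
    by (rule nn_integral_cong) (simp add: G'_def indicator_def)
  also have "\<dots> = ennreal (1 / (m+1))" using assms(3) int1a int1b by auto
  finally show ?thesis .
qed

lemma int_zero:
  assumes "\<And>w. w \<in> sq \<Longrightarrow> emeasure lborel (Zset k l w) = 0" and "m \<ge> 1"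
  shows "(\<integral>\<^sup>+w. emeasure lborel (Zset k l w) ^ m * indicator sq w \<partial>lborel) = 0"
proof -
  have "(\<integral>\<^sup>+w. emeasure lborel (Zset k l w) ^ m * indicator sq w \<partial>lborel) = (\<integral>\<^sup>+w. 0 \<partial>(lborel :: (real \<times> real) measure))"
    by (rule nn_integral_cong) (use assms in \<open>auto simp: indicator_def\<close>)
  then show ?thesis by simp
qed

definition P6 :: "(nat \<times> nat) set" where "P6 = {(0,1),(0,2),(0,3),(1,2),(1,3),(2,3)}"

lemma pair_int:
  assumes "(k, l) \<in> P6" "m \<ge> 1"
  shows "(\<integral>\<^sup>+w. emeasure lborel (Zset k l w) ^ m * indicator sq w \<partial>lborel) \<le> ennreal (1 / real (m+1)) * ennreal (1 / real (m+1))"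
proof -
  have sq: "w \<in> sq \<Longrightarrow> 0 \<le> fst w \<and> fst w \<le> 1 \<and> 0 \<le> snd w \<and> snd w \<le> 1" for w by (cases w) (auto simp: cbox_Pair_eq)
  consider "(k,l) = (0,1)" | "(k,l) = (0,2)" | "(k,l) = (0,3)" | "(k,l) = (1,2)" | "(k,l) = (1,3)" | "(k,l) = (2,3)"
    using assms(1) unfolding P6_def by blast
  then show ?thesis
  proof cases
    case 1
    have "emeasure lborel (Zset k l w) = ennreal ((\<lambda>x. x) (fst w) * (\<lambda>x. 1 - x) (snd w))" if "w \<in> sq" for w
    proof -
      have "Zset k l w = cbox (0, snd w) (fst w, 1)" using 1 that by (auto simp: Zset_def phi_def cbox_Pair_eq)
      then show ?thesis using sq[OF that] by (cases w) (simp add: emeasure_cbox2)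
    qed
    then show ?thesis by (subst int_FG) auto
  next
    case 2
    have "emeasure lborel (Zset k l w) = 0" if "w \<in> sq" for w
    proof -
      have "Zset k l w = cbox (0, snd w) (1, snd w)" using 2 that by (auto simp: Zset_def phi_def cbox_Pair_eq)
      then show ?thesis using sq[OF that] by (cases w) (simp add: emeasure_cbox2)
    qed
    then show ?thesis using assms(2) by (subst int_zero) auto
  next
    case 3
    have "emeasure lborel (Zset k l w) = ennreal ((\<lambda>x. 1 - x) (fst w) * (\<lambda>x. 1 - x) (snd w))" if "w \<in> sq" for w
    proof -
      have "Zset k l w = cbox (fst w, snd w) (1, 1)" using 3 that by (auto simp: Zset_def phi_def cbox_Pair_eq)
      then show ?thesis using sq[OF that] by (cases w) (simp add: emeasure_cbox2)
    qed
    then show ?thesis by (subst int_FG) auto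
  next
    case 4
    have "emeasure lborel (Zset k l w) = ennreal ((\<lambda>x. x) (fst w) * (\<lambda>x. x) (snd w))" if "w \<in> sq" for w
    proof -
      have "Zset k l w = cbox (0, 0) (fst w, snd w)" using 4 that by (auto simp: Zset_def phi_def cbox_Pair_eq)
      then show ?thesis using sq[OF that] by (cases w) (simp add: emeasure_cbox2)
    qed
    then show ?thesis by (subst int_FG) auto
  next
    case 5
    have "emeasure lborel (Zset k l w) = 0" if "w \<in> sq" for w
    proof -
      have "Zset k l w = cbox (fst w, 0) (fst w, 1)" using 5 that by (auto simp: Zset_def phi_def cbox_Pair_eq)
      then show ?thesis using sq[OF that] by (cases w) (simp add: emeasure_cbox2)
    qed
    then show ?thesis using assms(2) by (subst int_zero) auto
  next
    case 6
    have "emeasure lborel (Zset k l w) = ennreal ((\<lambda>x. 1 - x) (fst w) * (\<lambda>x. x) (snd w))" if "w \<in> sq" for w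
    proof -
      have "Zset k l w = cbox (fst w, 0) (1, snd w)" using 6 that by (auto simp: Zset_def phi_def cbox_Pair_eq)
      then show ?thesis using sq[OF that] by (cases w) (simp add: emeasure_cbox2)
    qed
    then show ?thesis by (subst int_FG) auto
  qed
qed



lemma dd_meas[measurable]: "(\<lambda>p. infdist p (edge c u v k)) \<in> borel_measurable borel"
  by (intro borel_measurable_continuous_onI continuous_intros)

lemma Bbound:
  fixes c u v :: "real \<times> real" and K :: real
  assumes uv: "u \<noteq> 0" "v \<noteq> 0" "inner u v = 0" and K: "pres (Phi c u v) K" "K > 0"
    and kl: "(k,l) \<in> P6" and n: "n \<ge> 2" and i: "i < n"
  shows "emeasure (PiM {..<n} (\<lambda>_. uniform_measure lborel (rect c u v)))
     {x \<in> space (PiM {..<n} (\<lambda>_. uniform_measure lborel (rect c u v))). \<forall>j\<in>{..<n}.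
        infdist (x i) (edge c u v k) \<le> infdist (x j) (edge c u v k) \<and> infdist (x i) (edge c u v l) \<le> infdist (x j) (edge c u v l)}
     \<le> ennreal (1 / real n) * ennreal (1 / real n)"
proof -
  define \<mu> where "\<mu> = uniform_measure lborel (rect c u v)"
  define P where "P p q \<longleftrightarrow> infdist p (edge c u v k) \<le> infdist q (edge c u v k) \<and> infdist p (edge c u v l) \<le> infdist q (edge c u v l)" for p q
  define J where "J = {..<n} - {i}"
  have IJ: "{..<n} = insert i J" using i by (auto simp: J_def)
  have iJ: "i \<notin> J" "finite J" by (auto simp: J_def)
  have cJ: "card J = n - 1" using i by (simp add: J_def)
  have Rm: "emeasure lborel (rect c u v) = ennreal K" by (rule rect_measure[OF K(1) uv])
  have ps: "prob_space \<mu>" unfolding \<mu>_def using Rm K(2) by (intro prob_space_uniform_measure) auto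
  have sets_mu[measurable_cong]: "sets \<mu> = sets borel" by (simp add: \<mu>_def)
  have space_mu[simp]: "space \<mu> = UNIV" by (simp add: \<mu>_def)
  interpret mu: prob_space \<mu> by (rule ps)
  have pm: "sets (\<mu> \<Otimes>\<^sub>M \<mu>) = sets (borel \<Otimes>\<^sub>M borel)"
    by (intro sets_pair_measure_cong sets_mu)
  have Qm: "{z \<in> space (\<mu> \<Otimes>\<^sub>M \<mu>). P (fst z) (snd z)} \<in> sets (\<mu> \<Otimes>\<^sub>M \<mu>)"
  proof -
    have "{z \<in> space (\<mu> \<Otimes>\<^sub>M \<mu>). P (fst z) (snd z)} = {z. P (fst z) (snd z)}"
      by (simp add: space_pair_measure)
    moreover have "{z :: (real\<times>real)\<times>(real\<times>real). P (fst z) (snd z)} \<in> sets borel"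
      unfolding P_def by (intro borel_closed closed_Collect_conj closed_Collect_le continuous_intros)
    ultimately show ?thesis unfolding pm borel_prod by simp
  qed
  have Dmeas: "(\<lambda>p. emeasure \<mu> {q \<in> space \<mu>. P p q}) \<in> borel_measurable borel"
  proof -
    have "(\<lambda>p. emeasure \<mu> (Pair p -` {z \<in> space (\<mu> \<Otimes>\<^sub>M \<mu>). P (fst z) (snd z)})) \<in> borel_measurable \<mu>"
      by (rule mu.measurable_emeasure_Pair[OF Qm])
    moreover have "Pair p -` {z \<in> space (\<mu> \<Otimes>\<^sub>M \<mu>). P (fst z) (snd z)} = {q \<in> space \<mu>. P p q}" for p
      by (auto simp: space_pair_measure)
    ultimately show ?thesis using measurable_cong_sets[OF sets_mu refl] by simp
  qed
  have "emeasure (PiM {..<n} (\<lambda>_. \<mu>)) {x \<in> space (PiM {..<n} (\<lambda>_. \<mu>)). \<forall>j\<in>{..<n}. P (x i) (x j)}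
      = (\<integral>\<^sup>+p. emeasure \<mu> {q \<in> space \<mu>. P p q} ^ card J \<partial>\<mu>)"
    unfolding IJ by (rule prod_first_bound[OF ps iJ(2) iJ(1) Qm]) (simp add: P_def)
  also have "\<dots> = (\<integral>\<^sup>+p. emeasure \<mu> {q \<in> space \<mu>. P p q} ^ card J \<partial>distr (uniform_measure lborel sq) borel (Phi c u v))"
    unfolding \<mu>_def[symmetric] mu_eq[OF K uv, folded \<mu>_def] ..
  also have "\<dots> = (\<integral>\<^sup>+w. emeasure \<mu> {q \<in> space \<mu>. P (Phi c u v w) q} ^ card J \<partial>uniform_measure lborel sq)"
    by (rule nn_integral_distr) (use Phi_meas Dmeas in auto)
  also have "\<dots> = (\<integral>\<^sup>+w. emeasure \<mu> {q \<in> space \<mu>. P (Phi c u v w) q} ^ card J * indicator sq w \<partial>lborel) / emeasure lborel sq"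
    by (rule nn_integral_uniform_measure) (use measurable_compose[OF Phi_meas Dmeas] in auto)
  also have "\<dots> = (\<integral>\<^sup>+w. emeasure \<mu> {q \<in> space \<mu>. P (Phi c u v w) q} ^ card J * indicator sq w \<partial>lborel)"
    by (simp add: sq_measure divide_ennreal_def)
  also have "\<dots> = (\<integral>\<^sup>+w. emeasure lborel (Zset k l w) ^ card J * indicator sq w \<partial>lborel)"
  proof (rule nn_integral_cong)
    fix w :: "real \<times> real"
    show "emeasure \<mu> {q \<in> space \<mu>. P (Phi c u v w) q} ^ card J * indicator sq w = emeasure lborel (Zset k l w) ^ card J * indicator sq w"
    proof (cases "w \<in> sq")
      case True
      have kl4: "k < 4" "l < 4" using kl by (auto simp: P6_def)
      have ckpos: "ck u v k > 0" "ck u v l > 0" using uv by (auto simp: ck_def)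
      have Dm: "{q \<in> space \<mu>. P (Phi c u v w) q} \<in> sets borel"
        using measurable_sets_borel[OF Dmeas] unfolding P_def by measurable
      have "sq \<inter> Phi c u v -` {q \<in> space \<mu>. P (Phi c u v w) q} = Zset k l w"
      proof -
        have "P (Phi c u v w) (Phi c u v w') \<longleftrightarrow> phi k w \<le> phi k w' \<and> phi l w \<le> phi l w'" if "w' \<in> sq" for w'
          unfolding P_def edge_dist[OF uv(3) True kl4(1)] edge_dist[OF uv(3) True kl4(2)]
            edge_dist[OF uv(3) that kl4(1)] edge_dist[OF uv(3) that kl4(2)]
          using ckpos by simp
        then show ?thesis by (auto simp: Zset_def)
      qed
      moreover have "emeasure \<mu> {q \<in> space \<mu>. P (Phi c u v w) q}
          = emeasure (uniform_measure lborel sq) (Phi c u v -` {q \<in> space \<mu>. P (Phi c u v w) q})"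
        unfolding mu_eq[OF K uv, folded \<mu>_def] using Dm Phi_meas by (subst emeasure_distr) auto
      moreover have "\<dots> = emeasure lborel (sq \<inter> Phi c u v -` {q \<in> space \<mu>. P (Phi c u v w) q})"
        using measurable_sets[OF Phi_meas Dm] by (simp add: sq_measure divide_ennreal_def)
      ultimately show ?thesis by simp
    qed simp
  qed
  also have "\<dots> \<le> ennreal (1 / real (card J + 1)) * ennreal (1 / real (card J + 1))"
    by (rule pair_int[OF kl]) (use n cJ in simp)
  also have "card J + 1 = n" using cJ n by simp
  finally show ?thesis unfolding \<mu>_def P_def .
qed



lemma not_nice_iff:
  "(\<not> nice (x ` {..<n}) c u v) \<longleftrightarrow> (\<exists>k<4. \<exists>l<4. edge c u v k \<noteq> edge c u v l \<and> (\<exists>i<n. \<forall>j<n.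
      infdist (x i) (edge c u v k) \<le> infdist (x j) (edge c u v k) \<and> infdist (x i) (edge c u v l) \<le> infdist (x j) (edge c u v l)))"
  (is "?L \<longleftrightarrow> ?R")
proof
  assume ?L
  then obtain e f p where ef: "e \<in> rect_edges c u v" "f \<in> rect_edges c u v" "e \<noteq> f"
    and ce: "closest_to (x ` {..<n}) e p" and cf: "closest_to (x ` {..<n}) f p"
    unfolding nice_def by blast
  obtain k where k: "k < 4" "e = edge c u v k" using ef(1) unfolding rect_edges_eq by auto
  obtain l where l: "l < 4" "f = edge c u v l" using ef(2) unfolding rect_edges_eq by auto
  obtain i where i: "i < n" "p = x i" using ce unfolding closest_to_def by auto
  have "\<forall>j<n. infdist (x i) e \<le> infdist (x j) e \<and> infdist (x i) f \<le> infdist (x j) f"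
    using ce cf i unfolding closest_to_def by auto
  then show ?R using k l i ef(3) by blast
next
  assume ?R
  then obtain k l i where kl: "k < 4" "l < 4" "edge c u v k \<noteq> edge c u v l" "i < n"
    and h: "\<forall>j<n. infdist (x i) (edge c u v k) \<le> infdist (x j) (edge c u v k) \<and> infdist (x i) (edge c u v l) \<le> infdist (x j) (edge c u v l)"
    by blast
  have "closest_to (x ` {..<n}) (edge c u v k) (x i)" "closest_to (x ` {..<n}) (edge c u v l) (x i)"
    using h kl(4) unfolding closest_to_def by auto
  moreover have "edge c u v k \<in> rect_edges c u v" "edge c u v l \<in> rect_edges c u v"
    using kl(1,2) unfolding rect_edges_eq by auto
  ultimately show ?L using kl(3) unfolding nice_def by blast
qed

theorem lemma4:
  fixes c u v :: "real \<times> real" and n :: nat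
  assumes "u \<noteq> 0" and "v \<noteq> 0" and "inner u v = 0" and "n \<ge> 2"
  defines "M \<equiv> PiM {..<n} (\<lambda>_. uniform_measure lborel (rect c u v))"
  shows "{x \<in> space M. \<not> nice (x ` {..<n}) c u v} \<in> sets M \<and>
         measure M {x \<in> space M. \<not> nice (x ` {..<n}) c u v} \<le> 6 / real n"
proof -
  note uv = assms(1-3)
  obtain K where K: "K > 0" "pres (Phi c u v) K" using pres_Phi[OF uv, of c] by blast
  define \<mu> where "\<mu> = uniform_measure lborel (rect c u v)"
  have Rm: "emeasure lborel (rect c u v) = ennreal K" by (rule rect_measure[OF K(2) uv])
  have ps: "prob_space \<mu>" unfolding \<mu>_def using Rm K(1) by (intro prob_space_uniform_measure) auto
  have sets_mu: "sets \<mu> = sets borel" by (simp add: \<mu>_def)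
  have Mdef: "M = PiM {..<n} (\<lambda>_. \<mu>)" by (simp add: M_def \<mu>_def)
  have psM: "prob_space M" unfolding Mdef by (rule prob_space_PiM) (rule ps)
  interpret P: prob_space M by (rule psM)
  define dd where "dd k p = infdist p (edge c u v k)" for k p
  define B where "B k l i = {x \<in> space M. \<forall>j\<in>{..<n}. dd k (x i) \<le> dd k (x j) \<and> dd l (x i) \<le> dd l (x j)}" for k l i
  have ddm: "(\<lambda>x. dd k (x i)) \<in> borel_measurable M" if "i < n" for k i
  proof -
    have "(\<lambda>p. dd k p) \<in> borel_measurable \<mu>" unfolding dd_def using measurable_cong_sets[OF sets_mu refl] dd_meas by blast
    from measurable_compose[OF measurable_component_singleton[of i "{..<n}" "\<lambda>_. \<mu>"] this] that
    show ?thesis by (simp add: Mdef)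
  qed
  have Bm: "B k l i \<in> sets M" if "i < n" for k l i
  proof -
    have "Measurable.pred M (\<lambda>x. \<forall>j\<in>{..<n}. dd k (x i) \<le> dd k (x j) \<and> dd l (x i) \<le> dd l (x j))"
    proof (intro pred_intros_finite pred_intros_logic)
      fix j assume "j \<in> {..<n}"
      then have j: "j < n" by simp
      show "Measurable.pred M (\<lambda>x. dd k (x i) \<le> dd k (x j))"
        unfolding pred_def by (intro borel_measurable_le ddm that j)
      show "Measurable.pred M (\<lambda>x. dd l (x i) \<le> dd l (x j))"
        unfolding pred_def by (intro borel_measurable_le ddm that j)
    qed simp
    then show ?thesis unfolding B_def by (simp add: pred_def)
  qed
  define bad where "bad = {x \<in> space M. \<not> nice (x ` {..<n}) c u v}"
  have bad_eq: "bad = (\<Union>k\<in>{..<4::nat}. \<Union>l\<in>{l\<in>{..<4::nat}. edge c u v k \<noteq> edge c u v l}. \<Union>i\<in>{..<n}. B k l i)"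
  proof (rule set_eqI)
    fix x
    show "x \<in> bad \<longleftrightarrow> x \<in> (\<Union>k\<in>{..<4::nat}. \<Union>l\<in>{l\<in>{..<4::nat}. edge c u v k \<noteq> edge c u v l}. \<Union>i\<in>{..<n}. B k l i)"
      unfolding bad_def B_def dd_def
      by (simp only: not_nice_iff mem_Collect_eq UN_iff lessThan_iff Bex_def Ball_def) blast
  qed
  have bad_m: "bad \<in> sets M"
    unfolding bad_eq using Bm by (auto intro!: sets.finite_UN)
  have bad_sub: "bad \<subseteq> (\<Union>p\<in>P6 \<times> {..<n}. B (fst (fst p)) (snd (fst p)) (snd p))"
  proof
    fix x assume "x \<in> bad"
    then obtain k l i where kl: "k < 4" "l < 4" "edge c u v k \<noteq> edge c u v l" "i < n" and xB: "x \<in> B k l i"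
      unfolding bad_eq by blast
    have "k \<noteq> l" using kl(3) by auto
    have Bsym: "B k l i = B l k i" unfolding B_def by auto
    show "x \<in> (\<Union>p\<in>P6 \<times> {..<n}. B (fst (fst p)) (snd (fst p)) (snd p))"
    proof (cases "k < l")
      case True
      then have "(k, l) \<in> P6" using kl(1,2) by (auto simp: P6_def less_Suc_eq numeral_eq_Suc)
      then show ?thesis using xB kl(4) by (intro UN_I[of "((k,l),i)"]) auto
    next
      case False
      then have "(l, k) \<in> P6" using kl(1,2) \<open>k \<noteq> l\<close> by (auto simp: P6_def less_Suc_eq numeral_eq_Suc)
      then show ?thesis using xB kl(4) Bsym by (intro UN_I[of "((l,k),i)"]) auto
    qed
  qed
  have Bb: "P.prob (B k l i) \<le> 1 / real n * (1 / real n)" if "(k,l) \<in> P6" "i < n" for k l i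
  proof -
    have "emeasure M (B k l i) \<le> ennreal (1 / real n) * ennreal (1 / real n)"
      using Bbound[OF uv K(2) K(1) that(1) assms(4) that(2)] unfolding B_def dd_def M_def .
    moreover have "ennreal (1 / real n) * ennreal (1 / real n) = ennreal (1 / real n * (1 / real n))"
      by (rule ennreal_mult[symmetric]) auto
    ultimately have "ennreal (P.prob (B k l i)) \<le> ennreal (1 / real n * (1 / real n))"
      by (simp only: P.emeasure_eq_measure)
    then show ?thesis by (subst (asm) ennreal_le_iff) auto
  qed
  have fin: "finite (P6 \<times> {..<n})" by (simp add: P6_def)
  have cardP: "card (P6 \<times> {..<n}) = 6 * n" by (simp add: P6_def card_cartesian_product)
  have "P.prob bad \<le> P.prob (\<Union>p\<in>P6 \<times> {..<n}. B (fst (fst p)) (snd (fst p)) (snd p))"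
    using bad_sub Bm by (intro P.finite_measure_mono) (auto intro!: sets.finite_UN fin simp: P6_def)
  also have "\<dots> \<le> (\<Sum>p\<in>P6 \<times> {..<n}. P.prob (B (fst (fst p)) (snd (fst p)) (snd p)))"
    using Bm by (intro P.finite_measure_subadditive_finite fin) auto
  also have "\<dots> \<le> real (card (P6 \<times> {..<n})) * (1 / real n * (1 / real n))"
    by (intro sum_bounded_above) (use Bb in auto)
  also have "\<dots> = 6 / real n" using assms(4) by (simp add: cardP field_simps)
  finally show ?thesis using bad_m unfolding bad_def by simp
qed

end
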